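(* Fix an RWA-P instance (setting as in the context) and let $M=\max_{r\in R}\big(\max_{w\in W^r}B^r_w+\max_{p\in P^r}B^r_p\big)$. If $\alpha,\beta>0$ satisfy $$\frac{\beta}{\alpha}>|R|\,(M-2)+2,$$ then for every pair of feasible solutions $(\hat x,\hat y)$, $(\tilde x,\tilde y)$ with $f_\beta(\hat x)>f_\beta(\tilde x)$ we have $f(\hat x,\hat y)<f(\tilde x,\tilde y)$.
   Context: An RWA-P instance consists of: a directed graph $G=(V,E)$ (parallel arcs allowed), whose arcs are called links; a finite set $\Lambda$ of wavelengths; a finite set $R$ of requests, each request $r$ having a source node $s^r$ and a distinct destination node $t^r$; and for each $r\in R$ nonempty finite sets $W^r$ (working lightpaths) and $P^r$ (protection lightpaths). Each lightpath $\ell$ of request $r$ is a directed path in $G$ from $s^r$ to $t^r$ together with a wavelength $\Lambda[\ell]\in\Lambda$; $E[\ell]$ denotes its set of links and its length is $B^r_\ell=|E[\ell]|\ge1$. Conflict sets: $\mathcal C_1=\{(r,w,p): w\in W^r,p\in P^r, E[w]\cap E[p]\ne\emptyset\}$; $\mathcal C_2=\{(r_1,r_2,w,p): r_1\ne r_2, w\in W^{r_1}, p\in P^{r_2}, \Lambda[w]=\Lambda[p], E[w]\cap E[p]\neq\emptyset\}$; $\mathcal C_3=\{(r_1,r_2,w_1,w_2): w_1\in W^{r_1}, w_2\in W^{r_2}, (r_1,w_1)\ne(r_2,w_2), \Lambda[w_1]=\Lambda[w_2], E[w_1]\cap E[w_2]\ne\emptyset\}$; $\mathcal C_4$ analogously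 for pairs of distinct protection lightpaths. A solution is a pair of binary vectors $x=(x^r_w)$, $y=(y^r_p)$; it is feasible if $\sum_{w\in W^r}x^r_w=\sum_{p\in P^r}y^r_p$ and $\sum_{w\in W^r}x^r_w\le1$ for all $r$, and $x^r_w+y^r_p\le1$ for $(r,w,p)\in\mathcal C_1$, $x^{r_1}_w+y^{r_2}_p\le1$ on $\mathcal C_2$, $x^{r_1}_{w_1}+x^{r_2}_{w_2}\le1$ on $\mathcal C_3$, $y^{r_1}_{p_1}+y^{r_2}_{p_2}\le1$ on $\mathcal C_4$. Define $f_\alpha(x,y)=\sum_{r}\big(\sum_{w}B^r_wx^r_w+\sum_{p}B^r_py^r_p\big)$ (link usage), $f_\beta(x)=\sum_r\sum_w x^r_w$ (granted requests), and $f(x,y)=\alpha f_\alpha(x,y)-\beta f_\beta(x)$. *)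

theory Defs
  imports Complex_Main
begin

text \<open>Directed graph: links of type 'e with tail and head maps (parallel arcs allowed).\<close>

definition is_dpath :: "'v set \<Rightarrow> 'e set \<Rightarrow> ('e \<Rightarrow> 'v) \<Rightarrow> ('e \<Rightarrow> 'v) \<Rightarrow> 'v \<Rightarrow> 'v \<Rightarrow> 'e list \<Rightarrow> bool" where
  "is_dpath V E src dst s t es \<longleftrightarrow>
     es \<noteq> [] \<and> set es \<subseteq> E \<and>
     src (List.hd es) = s \<and> dst (List.last es) = t \<and>
     (\<forall>i. Suc i < length es \<longrightarrow> dst (es ! i) = src (es ! Suc i)) \<and>
     distinct (map src es @ [dst (List.last es)])"

text \<open>An RWA-P instance. Lightpaths are abstract identifiers of type 'p, with
link list lnk and wavelength lam; E[l] = set (lnk l).\<close>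

definition rwap_instance ::
  "'v set \<Rightarrow> 'e set \<Rightarrow> ('e \<Rightarrow> 'v) \<Rightarrow> ('e \<Rightarrow> 'v) \<Rightarrow> 'l set \<Rightarrow> 'r set \<Rightarrow>
   ('r \<Rightarrow> 'v) \<Rightarrow> ('r \<Rightarrow> 'v) \<Rightarrow> ('r \<Rightarrow> 'p set) \<Rightarrow> ('r \<Rightarrow> 'p set) \<Rightarrow>
   ('p \<Rightarrow> 'e list) \<Rightarrow> ('p \<Rightarrow> 'l) \<Rightarrow> bool" where
  "rwap_instance V E src dst \<Lambda> R s t W P lnk lam \<longleftrightarrow>
     (\<forall>e\<in>E. src e \<in> V \<and> dst e \<in> V) \<and>
     finite \<Lambda> \<and> finite R \<and>
     (\<forall>r\<in>R. s r \<in> V \<and> t r \<in> V \<and> s r \<noteq> t r \<and>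
        finite (W r) \<and> W r \<noteq> {} \<and> finite (P r) \<and> P r \<noteq> {} \<and>
        (\<forall>l \<in> W r \<union> P r. is_dpath V E src dst (s r) (t r) (lnk l) \<and> lam l \<in> \<Lambda>))"

definition lpE :: "('p \<Rightarrow> 'e list) \<Rightarrow> 'p \<Rightarrow> 'e set" where
  "lpE lnk l = set (lnk l)"

definition lpB :: "('p \<Rightarrow> 'e list) \<Rightarrow> 'p \<Rightarrow> nat" where
  "lpB lnk l = card (lpE lnk l)"

definition feasible ::
  "'r set \<Rightarrow> ('r \<Rightarrow> 'p set) \<Rightarrow> ('r \<Rightarrow> 'p set) \<Rightarrow> ('p \<Rightarrow> 'e list) \<Rightarrow> ('p \<Rightarrow> 'l) \<Rightarrow>
   ('r \<Rightarrow> 'p \<Rightarrow> nat) \<Rightarrow> ('r \<Rightarrow> 'p \<Rightarrow> nat) \<Rightarrow> bool" where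
  "feasible R W P lnk lam x y \<longleftrightarrow>
     (\<forall>r\<in>R. \<forall>w\<in>W r. x r w \<in> {0,1}) \<and>
     (\<forall>r\<in>R. \<forall>p\<in>P r. y r p \<in> {0,1}) \<and>
     (\<forall>r\<in>R. (\<Sum>w\<in>W r. x r w) = (\<Sum>p\<in>P r. y r p) \<and> (\<Sum>w\<in>W r. x r w) \<le> 1) \<and>
     \<comment> \<open>C1\<close>
     (\<forall>r\<in>R. \<forall>w\<in>W r. \<forall>p\<in>P r. lpE lnk w \<inter> lpE lnk p \<noteq> {} \<longrightarrow> x r w + y r p \<le> 1) \<and>
     \<comment> \<open>C2\<close>
     (\<forall>r1\<in>R. \<forall>r2\<in>R. \<forall>w\<in>W r1. \<forall>p\<in>P r2.
        r1 \<noteq> r2 \<and> lam w = lam p \<and> lpE lnk w \<inter> lpE lnk p \<noteq> {} \<longrightarrow> x r1 w + y r2 p \<le> 1) \<and>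
     \<comment> \<open>C3\<close>
     (\<forall>r1\<in>R. \<forall>r2\<in>R. \<forall>w1\<in>W r1. \<forall>w2\<in>W r2.
        (r1, w1) \<noteq> (r2, w2) \<and> lam w1 = lam w2 \<and> lpE lnk w1 \<inter> lpE lnk w2 \<noteq> {} \<longrightarrow>
        x r1 w1 + x r2 w2 \<le> 1) \<and>
     \<comment> \<open>C4\<close>
     (\<forall>r1\<in>R. \<forall>r2\<in>R. \<forall>p1\<in>P r1. \<forall>p2\<in>P r2.
        (r1, p1) \<noteq> (r2, p2) \<and> lam p1 = lam p2 \<and> lpE lnk p1 \<inter> lpE lnk p2 \<noteq> {} \<longrightarrow>
        y r1 p1 + y r2 p2 \<le> 1)"

definition f_alpha ::
  "'r set \<Rightarrow> ('r \<Rightarrow> 'p set) \<Rightarrow> ('r \<Rightarrow> 'p set) \<Rightarrow> ('p \<Rightarrow> 'e list) \<Rightarrow>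
   ('r \<Rightarrow> 'p \<Rightarrow> nat) \<Rightarrow> ('r \<Rightarrow> 'p \<Rightarrow> nat) \<Rightarrow> nat" where
  "f_alpha R W P lnk x y =
     (\<Sum>r\<in>R. (\<Sum>w\<in>W r. lpB lnk w * x r w) + (\<Sum>p\<in>P r. lpB lnk p * y r p))"

definition f_beta :: "'r set \<Rightarrow> ('r \<Rightarrow> 'p set) \<Rightarrow> ('r \<Rightarrow> 'p \<Rightarrow> nat) \<Rightarrow> nat" where
  "f_beta R W x = (\<Sum>r\<in>R. \<Sum>w\<in>W r. x r w)"

definition f_obj ::
  "real \<Rightarrow> real \<Rightarrow> 'r set \<Rightarrow> ('r \<Rightarrow> 'p set) \<Rightarrow> ('r \<Rightarrow> 'p set) \<Rightarrow> ('p \<Rightarrow> 'e list) \<Rightarrow>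
   ('r \<Rightarrow> 'p \<Rightarrow> nat) \<Rightarrow> ('r \<Rightarrow> 'p \<Rightarrow> nat) \<Rightarrow> real" where
  "f_obj \<alpha> \<beta> R W P lnk x y = \<alpha> * real (f_alpha R W P lnk x y) - \<beta> * real (f_beta R W x)"

definition maxlen ::
  "'r set \<Rightarrow> ('r \<Rightarrow> 'p set) \<Rightarrow> ('r \<Rightarrow> 'p set) \<Rightarrow> ('p \<Rightarrow> 'e list) \<Rightarrow> nat" where
  "maxlen R W P lnk = Max ((\<lambda>r. Max (lpB lnk ` W r) + Max (lpB lnk ` P r)) ` R)"

end

theory Submission
  imports Defs
begin

lemma feas_eq: "feasible R W P lnk lam x y \<Longrightarrow> r \<in> R \<Longrightarrow> (\<Sum>w\<in>W r. x r w) = (\<Sum>p\<in>P r. y r p)"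
  unfolding feasible_def by (elim conjE) (drule bspec, assumption, elim conjE, assumption)
lemma feas_le: "feasible R W P lnk lam x y \<Longrightarrow> r \<in> R \<Longrightarrow> (\<Sum>w\<in>W r. x r w) \<le> 1"
  unfolding feasible_def by (elim conjE) (drule bspec, assumption, elim conjE, assumption)

lemma B_pos:
  assumes inst: "rwap_instance V E src dst \<Lambda> R s t W P lnk lam"
    and r: "r \<in> R" and l: "l \<in> W r \<union> P r"
  shows "1 \<le> lpB lnk l"
proof -
  have "is_dpath V E src dst (s r) (t r) (lnk l)" using inst r l unfolding rwap_instance_def by blast
  hence "lnk l \<noteq> []" unfolding is_dpath_def by blast
  thus ?thesis unfolding lpB_def lpE_def by (simp add: Suc_le_eq card_gt_0_iff)
qed

lemma upper_sum:
  assumes fin: "finite A"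
  shows "(\<Sum>w\<in>A. lpB lnk w * x w) \<le> Max (lpB lnk ` A) * (\<Sum>w\<in>A. x w)"
proof -
  have "(\<Sum>w\<in>A. lpB lnk w * x w) \<le> (\<Sum>w\<in>A. Max (lpB lnk ` A) * x w)"
    by (rule sum_mono) (simp add: fin)
  thus ?thesis by (simp add: sum_distrib_left)
qed

lemma lower_sum:
  assumes "\<And>w. w \<in> A \<Longrightarrow> 1 \<le> lpB lnk w"
  shows "(\<Sum>w\<in>A. x w) \<le> (\<Sum>w\<in>A. lpB lnk w * x w)"
  by (rule sum_mono) (use assms in simp)

theorem proposition2:
  fixes V :: "'v set" and E :: "'e set" and src dst :: "'e \<Rightarrow> 'v"
    and \<Lambda> :: "'l set" and R :: "'r set" and s t :: "'r \<Rightarrow> 'v"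
    and W P :: "'r \<Rightarrow> 'p set" and lnk :: "'p \<Rightarrow> 'e list" and lam :: "'p \<Rightarrow> 'l"
    and \<alpha> \<beta> :: real
    and xh yh xt yt :: "'r \<Rightarrow> 'p \<Rightarrow> nat"
  assumes inst: "rwap_instance V E src dst \<Lambda> R s t W P lnk lam"
    and pos: "\<alpha> > 0" "\<beta> > 0"
    and ratio: "\<beta> / \<alpha> > real (card R) * (real (maxlen R W P lnk) - 2) + 2"
    and feas_h: "feasible R W P lnk lam xh yh"
    and feas_t: "feasible R W P lnk lam xt yt"
    and more: "f_beta R W xh > f_beta R W xt"
  shows "f_obj \<alpha> \<beta> R W P lnk xh yh < f_obj \<alpha> \<beta> R W P lnk xt yt"
proof -
  define M where "M = maxlen R W P lnk"
  have finR: "finite R" and finW: "\<And>r. r \<in> R \<Longrightarrow> finite (W r)" and finP: "\<And>r. r \<in> R \<Longrightarrow> finite (P r)"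
    and neW: "\<And>r. r \<in> R \<Longrightarrow> W r \<noteq> {}" and neP: "\<And>r. r \<in> R \<Longrightarrow> P r \<noteq> {}"
    using inst unfolding rwap_instance_def by auto
  have Mr: "Max (lpB lnk ` W r) + Max (lpB lnk ` P r) \<le> M" if "r \<in> R" for r
    unfolding M_def maxlen_def using finR that by (intro Max_ge) auto
  have Bw: "\<And>r w. r \<in> R \<Longrightarrow> w \<in> W r \<Longrightarrow> 1 \<le> lpB lnk w"
    and Bp: "\<And>r w. r \<in> R \<Longrightarrow> w \<in> P r \<Longrightarrow> 1 \<le> lpB lnk w"
    using B_pos[OF inst] by auto
  have Rne: "R \<noteq> {}" using more unfolding f_beta_def by auto
  then obtain r0 where r0: "r0 \<in> R" by blast
  have "1 \<le> Max (lpB lnk ` W r0)"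
  proof -
    obtain w where "w \<in> W r0" using neW[OF r0] by blast
    hence "lpB lnk w \<le> Max (lpB lnk ` W r0)" using finW[OF r0] by auto
    thus ?thesis using Bw[OF r0 \<open>w \<in> W r0\<close>] by linarith
  qed
  moreover have "1 \<le> Max (lpB lnk ` P r0)"
  proof -
    obtain w where "w \<in> P r0" using neP[OF r0] by blast
    hence "lpB lnk w \<le> Max (lpB lnk ` P r0)" using finP[OF r0] by auto
    thus ?thesis using Bp[OF r0 \<open>w \<in> P r0\<close>] by linarith
  qed
  ultimately have M2: "2 \<le> M" using Mr[OF r0] by linarith
  have up: "f_alpha R W P lnk x y \<le> M * f_beta R W x" if fe: "feasible R W P lnk lam x y" for x y
  proof -
    have eq: "\<And>r. r \<in> R \<Longrightarrow> (\<Sum>w\<in>W r. x r w) = (\<Sum>p\<in>P r. y r p)"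
      using feas_eq[OF fe] by blast
    have "f_alpha R W P lnk x y \<le> (\<Sum>r\<in>R. M * (\<Sum>w\<in>W r. x r w))"
      unfolding f_alpha_def
    proof (rule sum_mono)
      fix r assume r: "r \<in> R"
      have "(\<Sum>w\<in>W r. lpB lnk w * x r w) + (\<Sum>p\<in>P r. lpB lnk p * y r p)
          \<le> Max (lpB lnk ` W r) * (\<Sum>w\<in>W r. x r w) + Max (lpB lnk ` P r) * (\<Sum>p\<in>P r. y r p)"
        using upper_sum[OF finW[OF r], of lnk "x r"] upper_sum[OF finP[OF r], of lnk "y r"] by (rule add_mono)
      also have "\<dots> = (Max (lpB lnk ` W r) + Max (lpB lnk ` P r)) * (\<Sum>w\<in>W r. x r w)"
        using eq[OF r] by (simp add: algebra_simps)
      also have "\<dots> \<le> M * (\<Sum>w\<in>W r. x r w)" using Mr[OF r] by simp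
      finally show "(\<Sum>w\<in>W r. lpB lnk w * x r w) + (\<Sum>p\<in>P r. lpB lnk p * y r p) \<le> M * (\<Sum>w\<in>W r. x r w)" .
    qed
    thus ?thesis unfolding f_beta_def by (simp add: sum_distrib_left)
  qed
  have low: "2 * f_beta R W x \<le> f_alpha R W P lnk x y" if fe: "feasible R W P lnk lam x y" for x y
  proof -
    have eq: "\<And>r. r \<in> R \<Longrightarrow> (\<Sum>w\<in>W r. x r w) = (\<Sum>p\<in>P r. y r p)"
      using feas_eq[OF fe] by blast
    have "(\<Sum>r\<in>R. 2 * (\<Sum>w\<in>W r. x r w)) \<le> f_alpha R W P lnk x y"
      unfolding f_alpha_def
    proof (rule sum_mono)
      fix r assume r: "r \<in> R"
      have "(\<Sum>w\<in>W r. x r w) \<le> (\<Sum>w\<in>W r. lpB lnk w * x r w)"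
        by (rule lower_sum) (use Bw[OF r] in auto)
      moreover have "(\<Sum>w\<in>P r. y r w) \<le> (\<Sum>w\<in>P r. lpB lnk w * y r w)"
        by (rule lower_sum) (use Bp[OF r] in auto)
      ultimately show "2 * (\<Sum>w\<in>W r. x r w) \<le> (\<Sum>w\<in>W r. lpB lnk w * x r w) + (\<Sum>p\<in>P r. lpB lnk p * y r p)"
        using eq[OF r] by linarith
    qed
    thus ?thesis unfolding f_beta_def by (simp add: sum_distrib_left)
  qed
  have card: "f_beta R W xh \<le> card R"
  proof -
    have le1: "\<forall>r\<in>R. (\<Sum>w\<in>W r. xh r w) \<le> 1" using feas_le[OF feas_h] by blast
    have "f_beta R W xh \<le> (\<Sum>r\<in>R. 1)" unfolding f_beta_def
      by (rule sum_mono) (use le1 in blast)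
    thus ?thesis by simp
  qed
  define a where "a = real (f_alpha R W P lnk xh yh)"
  define a' where "a' = real (f_alpha R W P lnk xt yt)"
  define b where "b = real (f_beta R W xh)"
  define b' where "b' = real (f_beta R W xt)"
  define m where "m = real M"
  define n where "n = real (card R)"
  define q where "q = \<beta> / \<alpha>"
  have h1: "a \<le> m * b" unfolding a_def m_def b_def using up[OF feas_h] by (metis of_nat_le_iff of_nat_mult)
  have h2: "2 * b' \<le> a'" unfolding a'_def b'_def using low[OF feas_t] by (metis of_nat_le_iff of_nat_mult of_nat_numeral)
  have h3: "b \<le> n" unfolding b_def n_def using card by simp
  have h4: "b' + 1 \<le> b" unfolding b_def b'_def using more by simp
  have m2: "2 \<le> m" unfolding m_def using M2 by simp
  have hq: "q > n * (m - 2) + 2" unfolding q_def n_def m_def M_def using ratio by simp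
  have b'0: "0 \<le> b'" unfolding b'_def by simp
  have "a - a' \<le> (m - 2) * b + 2 * (b - b')" using h1 h2 by (simp add: algebra_simps)
  also have "\<dots> \<le> (m - 2) * n + 2 * (b - b')" using h3 m2 by (simp add: mult_left_mono)
  also have "\<dots> \<le> ((m - 2) * n + 2) * (b - b')"
  proof -
    have "0 \<le> (m - 2) * n" using m2 by (simp add: n_def)
    hence "(m - 2) * n * 1 \<le> (m - 2) * n * (b - b')" using h4 by (intro mult_left_mono) auto
    thus ?thesis by (simp add: algebra_simps)
  qed
  also have "\<dots> < q * (b - b')" using hq h4 by (intro mult_strict_right_mono) (simp_all add: algebra_simps)
  finally have "a - a' < q * (b - b')" .
  hence "\<alpha> * (a - a') < \<alpha> * (q * (b - b'))" using pos by simp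
  also have "\<alpha> * (q * (b - b')) = \<beta> * (b - b')" unfolding q_def using pos by simp
  finally have "\<alpha> * a - \<beta> * b < \<alpha> * a' - \<beta> * b'" by (simp add: algebra_simps)
  thus ?thesis unfolding f_obj_def a_def a'_def b_def b'_def .
qed

end
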